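(* Let $(x^*,y^* )$ be an optimal solution of the LP relaxation of forest cover, $G^*$ the subgraph with vertex set $\{i: x^*_i>0\}$ and edge set $\{(i,j): y^*_{ij}>0\}$, and $C=(V_C,E_C)$ a connected component of $G^*$ with at least one edge. Let $e_1,\dots,e_{|E_C|}$ be the edges of $C$ in the order (nondecreasing weight) in which Kruskal's algorithm considers them when computing the minimum spanning tree $M$ of $C$, and let $T$ be the tree obtained from $M$ by deleting every degree-one vertex $i$ of $M$ with $x^*_i<1/2$ together with its incident edge. For $1\le r\le|E_C|$ let $H_r$ be the graph with edge set $E_{H_r}=\{e_1,\dots,e_r\}$ and vertex set $V_{H_r}$ the endpoints of these edges, with connected components $S^1_r,\dots,S^k_r$, and let $T^f_r$ be the graph whose edges $E_{T^f_r}$ are the edges of $S^f_r$ belonging to $T$ and whose vertices $V_{T^f_r}$ are their endpoints. Then $$\sum_{i\in V_{H_r}}x^*_i-\sum_{(i,j)\in E_{H_r}}y^*_{ij}\;\ge\;\sum_{f=1}^k\big(|V_{T^f_r}|-|E_{T^f_r}|\big).$$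
   Context: Graph $G=(V,E)$ with edge weights $w:E\to[0,1]$. For $S\subseteq V$, $E(S)$ denotes the edges with both endpoints in $S$. The LP relaxation of forest cover: minimize $\sum_{i\in V}x_i-\sum_{(i,j)\in E}y_{ij}(1-w_{ij})$ subject to $x_i+x_j\ge1$ and $x_i\ge y_{ij}$, $x_j\ge y_{ij}$ for all $(i,j)\in E$; $\sum_{i\in S}x_i-\sum_{(i,j)\in E(S)}y_{ij}\ge1$ for all $S\subseteq V$ with $E(S)\ne\emptyset$; $0\le x,y\le1$. *)

theory Defs
  imports Complex_Main
begin

definition simple_graph :: "'a set \<Rightarrow> 'a set set \<Rightarrow> bool" where
  "simple_graph V E \<longleftrightarrow> finite V \<and> (\<forall>e\<in>E. card e = 2 \<and> e \<subseteq> V)"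

definition edges_in :: "'a set set \<Rightarrow> 'a set \<Rightarrow> 'a set set" where
  "edges_in E S = {e \<in> E. e \<subseteq> S}"

definition adj :: "'a set set \<Rightarrow> 'a \<Rightarrow> 'a \<Rightarrow> bool" where
  "adj F u v \<longleftrightarrow> {u, v} \<in> F"

definition conn :: "'a set set \<Rightarrow> 'a \<Rightarrow> 'a \<Rightarrow> bool" where
  "conn F u v \<longleftrightarrow> (adj F)\<^sup>*\<^sup>* u v"

definition verts_of :: "'a set set \<Rightarrow> 'a set" where
  "verts_of F = \<Union>F"

definition components :: "'a set \<Rightarrow> 'a set set \<Rightarrow> 'a set set" where
  "components W F = {{v \<in> W. conn F u v} | u. u \<in> W}"

definition degree :: "'a set set \<Rightarrow> 'a \<Rightarrow> nat" where
  "degree F i = card {e \<in> F. i \<in> e}"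

definition lp_feasible :: "'a set \<Rightarrow> 'a set set \<Rightarrow> ('a \<Rightarrow> real) \<Rightarrow> ('a set \<Rightarrow> real) \<Rightarrow> bool" where
  "lp_feasible V E x y \<longleftrightarrow>
     (\<forall>e\<in>E. \<forall>i j. e = {i, j} \<longrightarrow> x i + x j \<ge> 1 \<and> x i \<ge> y e \<and> x j \<ge> y e) \<and>
     (\<forall>S. S \<subseteq> V \<and> edges_in E S \<noteq> {} \<longrightarrow> sum x S - sum y (edges_in E S) \<ge> 1) \<and>
     (\<forall>i\<in>V. 0 \<le> x i \<and> x i \<le> 1) \<and> (\<forall>e\<in>E. 0 \<le> y e \<and> y e \<le> 1)"

definition lp_obj :: "'a set \<Rightarrow> 'a set set \<Rightarrow> ('a set \<Rightarrow> real) \<Rightarrow> ('a \<Rightarrow> real) \<Rightarrow> ('a set \<Rightarrow> real) \<Rightarrow> real" where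
  "lp_obj V E w x y = sum x V - (\<Sum>e\<in>E. y e * (1 - w e))"

definition lp_optimal :: "'a set \<Rightarrow> 'a set set \<Rightarrow> ('a set \<Rightarrow> real) \<Rightarrow> ('a \<Rightarrow> real) \<Rightarrow> ('a set \<Rightarrow> real) \<Rightarrow> bool" where
  "lp_optimal V E w x y \<longleftrightarrow> lp_feasible V E x y \<and>
     (\<forall>x' y'. lp_feasible V E x' y' \<longrightarrow> lp_obj V E w x y \<le> lp_obj V E w x' y')"

definition kruskal_step :: "'a set set \<Rightarrow> 'a set \<Rightarrow> 'a set set" where
  "kruskal_step F e = (if \<exists>u v. e = {u, v} \<and> conn F u v then F else insert e F)"

definition kruskal :: "'a set list \<Rightarrow> 'a set set" where
  "kruskal es = foldl kruskal_step {} es"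

end

theory Submission
  imports Defs
begin

lemma adj_sym: "adj F u v \<Longrightarrow> adj F v u" by (simp add: adj_def insert_commute)

lemma conn_refl: "conn F u u" by (simp add: conn_def)

lemma conn_sym: "conn F u v \<Longrightarrow> conn F v u"
  unfolding conn_def
proof (induction rule: rtranclp_induct)
  case base then show ?case by simp
next
  case (step y z)
  have "adj F z y" using step(2) by (rule adj_sym)
  then show ?case using step(3) by (rule converse_rtranclp_into_rtranclp)
qed

lemma conn_trans: "conn F u v \<Longrightarrow> conn F v w \<Longrightarrow> conn F u w"
  unfolding conn_def by (rule rtranclp_trans)

lemma conn_step: "conn F u v \<Longrightarrow> {v, w} \<in> F \<Longrightarrow> conn F u w"
  unfolding conn_def adj_def by (rule rtranclp.rtrancl_into_rtrancl)

lemma conn_lift: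
  assumes "conn F u v" "\<forall>e\<in>F. \<forall>a b. e = {a,b} \<longrightarrow> conn G a b"
  shows "conn G u v"
  using assms(1) unfolding conn_def
proof (induction rule: rtranclp_induct)
  case base then show ?case by simp
next
  case (step y z)
  have "{y,z} \<in> F" using step(2) by (simp add: adj_def)
  then have "conn G y z" using assms(2) by blast
  with step(3) show ?case unfolding conn_def by (rule rtranclp_trans)
qed

lemma conn_mono: "conn F u v \<Longrightarrow> F \<subseteq> G \<Longrightarrow> conn G u v"
proof -
  assume a: "conn F u v" "F \<subseteq> G"
  show ?thesis
  proof (rule conn_lift[OF a(1)], intro ballI allI impI)
    fix e a' b assume "e \<in> F" "e = {a', b}"
    then have "adj G a' b" using a(2) by (auto simp: adj_def)
    then show "conn G a' b" unfolding conn_def by (rule r_into_rtranclp)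
  qed
qed

lemma kr_mono: "F \<subseteq> foldl kruskal_step F L"
proof (induction L arbitrary: F)
  case Nil then show ?case by simp
next
  case (Cons e L)
  have "F \<subseteq> kruskal_step F e" by (auto simp: kruskal_step_def)
  then show ?case using Cons[of "kruskal_step F e"] by simp
qed

lemma kr_sub: "foldl kruskal_step F L \<subseteq> F \<union> set L"
proof (induction L arbitrary: F)
  case Nil then show ?case by simp
next
  case (Cons e L)
  have "kruskal_step F e \<subseteq> F \<union> {e}" by (auto simp: kruskal_step_def)
  then show ?case using Cons[of "kruskal_step F e"] by auto
qed

lemma kr_conn: "\<forall>e\<in>set L. \<forall>a b. e = {a,b} \<longrightarrow> conn (foldl kruskal_step {} L) a b"
proof (induction L rule: rev_induct)
  case Nil then show ?case by simp
next
  case (snoc e L)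
  define K where "K = foldl kruskal_step {} L"
  have sub: "K \<subseteq> kruskal_step K e" by (auto simp: kruskal_step_def)
  have new: "conn (kruskal_step K e) a b" if "e = {a,b}" for a b
  proof (cases "\<exists>u v. e = {u, v} \<and> conn K u v")
    case True
    then obtain u v where uv: "e = {u,v}" "conn K u v" by blast
    have "{a,b} = {u,v}" using uv that by simp
    then have "(a = u \<and> b = v) \<or> (a = v \<and> b = u)" by (simp add: doubleton_eq_iff)
    then have "conn K a b" using uv(2) conn_sym[OF uv(2)] by blast
    then show ?thesis using True by (simp add: kruskal_step_def)
  next
    case False
    then have "kruskal_step K e = insert e K" unfolding kruskal_step_def by auto
    then show ?thesis using that unfolding conn_def adj_def by (simp add: r_into_rtranclp)
  qed
  have eq: "foldl kruskal_step {} (L@[e]) = kruskal_step K e" by (simp add: K_def)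
  show ?case
  proof (intro ballI allI impI)
    fix e' a b assume e': "e' \<in> set (L@[e])" "e' = {a,b}"
    show "conn (foldl kruskal_step {} (L@[e])) a b"
    proof (cases "e' = e")
      case True then show ?thesis unfolding eq using e' by (intro new) simp
    next
      case False then have "e' \<in> set L" using e' by simp
      then have "conn K a b" using snoc.IH e' unfolding K_def by blast
      then show ?thesis unfolding eq using sub by (rule conn_mono)
    qed
  qed
qed

lemma conn_card:
  assumes fin: "finite F" and two: "\<forall>e\<in>F. card e = 2"
    and c: "\<forall>v\<in>verts_of F. conn F u v"
  shows "card (verts_of F) \<le> card F + 1"
proof -
  have finv: "finite (verts_of F)" unfolding verts_of_def
  proof (rule finite_Union[OF fin])
    fix e assume "e \<in> F" then show "finite e" using two by (intro card_ge_0_finite) auto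
  qed
  define d where "d v = (LEAST n. (adj F ^^ n) u v)" for v
  have dP: "(adj F ^^ d v) u v" if "v \<in> verts_of F" for v
  proof -
    have "conn F u v" using c that by blast
    then have "\<exists>n. (adj F ^^ n) u v" unfolding conn_def by (rule rtranclp_imp_relpowp)
    then show ?thesis unfolding d_def by (rule LeastI_ex)
  qed
  have dle: "d v \<le> n" if "(adj F ^^ n) u v" for v n
    unfolding d_def using that by (rule Least_le)
  define g where "g v = (SOME p. (adj F ^^ (d v - 1)) u p \<and> adj F p v)" for v
  have gP: "(adj F ^^ (d v - 1)) u (g v) \<and> adj F (g v) v \<and> d (g v) + 1 = d v"
    if v: "v \<in> verts_of F - {u}" for v
  proof -
    have "d v \<noteq> 0"
    proof
      assume "d v = 0"
      then have "(adj F ^^ 0) u v" using dP[of v] v by simp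
      then show False using v by simp
    qed
    then obtain m where m: "d v = Suc m" using not0_implies_Suc by blast
    have "(adj F ^^ Suc m) u v" using dP[of v] v m by simp
    then obtain p where "(adj F ^^ m) u p" "adj F p v" by (rule relpowp_Suc_E)
    then have ex: "\<exists>p. (adj F ^^ (d v - 1)) u p \<and> adj F p v" using m by auto
    have gp: "(adj F ^^ (d v - 1)) u (g v) \<and> adj F (g v) v"
      unfolding g_def by (rule someI_ex[OF ex])
    have "d (g v) \<le> d v - 1" using gp dle by blast
    moreover have "g v \<in> verts_of F" using gp by (auto simp: adj_def verts_of_def)
    then have "(adj F ^^ Suc (d (g v))) u v" by (rule relpowp_Suc_I[OF dP]) (use gp in auto)
    then have "d v \<le> Suc (d (g v))" by (rule dle)
    ultimately show ?thesis using gp m by auto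
  qed
  define f where "f v = {g v, v}" for v
  have "inj_on f (verts_of F - {u})"
  proof (rule inj_onI)
    fix v v' assume v: "v \<in> verts_of F - {u}" and v': "v' \<in> verts_of F - {u}" and eq: "f v = f v'"
    show "v = v'"
    proof (rule ccontr)
      assume ne: "v \<noteq> v'"
      then have "v = g v'" "v' = g v" using eq unfolding f_def by (auto simp: doubleton_eq_iff)
      then have e1: "v = g v'" and e2: "v' = g v" by auto
      have h1: "d (g v') + 1 = d v'" and h2: "d (g v) + 1 = d v" using gP[OF v] gP[OF v'] by auto
      have "d v + 1 = d v'" using h1 e1 by simp
      moreover have "d v' + 1 = d v" using h2 e2 by simp
      ultimately show False by linarith
    qed
  qed
  moreover have "f ` (verts_of F - {u}) \<subseteq> F" using gP unfolding f_def adj_def by auto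
  ultimately have "card (verts_of F - {u}) \<le> card F" using fin by (rule card_inj_on_le)
  moreover have "card (verts_of F) \<le> card (verts_of F - {u}) + 1"
  proof (cases "u \<in> verts_of F")
    case True
    have "card (verts_of F) > 0" using finv True card_gt_0_iff by blast
    then show ?thesis using card_Diff_singleton[OF True] by simp
  qed simp
  ultimately show ?thesis by linarith
qed



lemma path_good:
  assumes p: "(adj K)\<^sup>*\<^sup>* u v" and KM: "K \<subseteq> M" and KE: "K \<subseteq> EH"
    and two: "\<forall>e\<in>M. card e = 2" and bad: "\<forall>i. \<not> good i \<longrightarrow> card {e\<in>M. i\<in>e} = 1"
    and gu: "good u" and uS: "u \<in> S" and cl: "\<forall>a b. {a,b} \<in> EH \<longrightarrow> a \<in> S \<longrightarrow> b \<in> S"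
    and T_def: "T = {e \<in> edges_in EH S. e \<in> {e\<in>M. \<forall>i\<in>e. good i}}"
  shows "v \<in> S \<and> ((good v \<and> conn T u v) \<or> (\<not> good v \<and> (\<exists>w. good w \<and> conn T u w \<and> {w,v} \<in> K)))"
  using p
proof (induction rule: rtranclp_induct)
  case base then show ?case using gu uS by (simp add: conn_refl)
next
  case (step v z)
  have vzK: "{v,z} \<in> K" using step(2) by (simp add: adj_def)
  have vS: "v \<in> S" using step(3) by blast
  have "{v,z} \<in> EH" using vzK KE by blast
  then have zS: "z \<in> S" using vS by (rule cl[rule_format])
  have IH: "(good v \<and> conn T u v) \<or> (\<not> good v \<and> (\<exists>w. good w \<and> conn T u w \<and> {w,v} \<in> K))"
    using step(3) by blast
  show ?case
  proof (cases "good v")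
    case True
    then have cv: "conn T u v" using IH by blast
    show ?thesis
    proof (cases "good z")
      case True
      have "{v,z} \<in> T" unfolding T_def edges_in_def using vzK KM KE vS zS True \<open>good v\<close> by auto
      then have "conn T u z" by (rule conn_step[OF cv])
      then show ?thesis using zS True by blast
    next
      case False
      have "\<exists>w. good w \<and> conn T u w \<and> {w,z} \<in> K" using \<open>good v\<close> cv vzK by (intro exI[of _ v]) simp
      then show ?thesis using zS False by simp
    qed
  next
    case False
    then obtain w where w: "good w" "conn T u w" "{w,v} \<in> K" using IH by blast
    have c1: "card {e\<in>M. v\<in>e} = 1" by (rule bad[rule_format, OF False])
    then obtain e0 where e0: "{e\<in>M. v\<in>e} = {e0}" by (rule card_1_singletonE)
    have A1: "{w,v} \<in> M" using w(3) KM by blast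
    have A2: "{v,z} \<in> M" using vzK KM by blast
    have "{w,v} \<in> {e\<in>M. v\<in>e}" using A1 by simp
    then have "{w,v} \<in> {e0}" by (simp only: e0)
    then have q1: "{w,v} = e0" by simp
    have "{v,z} \<in> {e\<in>M. v\<in>e}" using A2 by simp
    then have "{v,z} \<in> {e0}" by (simp only: e0)
    then have q2: "{v,z} = e0" by simp
    have eq: "{w,v} = {v,z}" using q1 q2 by simp
    have "card {v,z} = 2" using two vzK KM by blast
    then have "z \<noteq> v" by auto
    then have "z = w" using eq by (auto simp: doubleton_eq_iff)
    then show ?thesis using w zS by blast
  qed
qed


theorem lemma6p3:
  fixes V :: "'a set" and E :: "'a set set" and w :: "'a set \<Rightarrow> real"
    and x :: "'a \<Rightarrow> real" and y :: "'a set \<Rightarrow> real"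
    and VC :: "'a set" and es :: "'a set list" and r :: nat
  assumes graph: "simple_graph V E"
    and weights: "\<forall>e\<in>E. 0 \<le> w e \<and> w e \<le> 1"
    and opt: "lp_optimal V E w x y"
    and comp: "VC \<in> components {i \<in> V. x i > 0} {e \<in> E. y e > 0}"
    and nonempty: "edges_in {e \<in> E. y e > 0} VC \<noteq> {}"
    and order: "distinct es" "set es = edges_in {e \<in> E. y e > 0} VC" "sorted (map w es)"
    and r: "1 \<le> r" "r \<le> length es"
  shows
    "let M = kruskal es;
         ET = {e \<in> M. \<forall>i\<in>e. \<not> (degree M i = 1 \<and> x i < 1/2)};
         EH = set (take r es);
         VH = verts_of EH
     in sum x VH - sum y EH \<ge>
        (\<Sum>S\<in>components VH EH.
           let ETf = {e \<in> edges_in EH S. e \<in> ET}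
           in real (card (verts_of ETf)) - real (card ETf))"
proof -
  define M where "M = kruskal es"
  define ET where "ET = {e \<in> M. \<forall>i\<in>e. \<not> (degree M i = 1 \<and> x i < 1/2)}"
  define EH where "EH = set (take r es)"
  define VH where "VH = verts_of EH"
  define K where "K = foldl kruskal_step {} (take r es)"
  define good where "good i = (\<not> (degree M i = 1 \<and> x i < 1/2))" for i
  have ET': "ET = {e\<in>M. \<forall>i\<in>e. good i}" unfolding ET_def good_def by simp
  have E2: "\<forall>e\<in>E. card e = 2 \<and> e \<subseteq> V" and finV: "finite V"
    using graph unfolding simple_graph_def by auto
  have finE: "finite E"
  proof (rule finite_subset[of E "Pow V"])
    show "E \<subseteq> Pow V" using E2 by blast
  qed (use finV in simp)
  have VCV: "VC \<subseteq> V" using comp unfolding components_def by auto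
  have esE: "\<forall>e\<in>set es. e \<in> E \<and> 0 < y e \<and> e \<subseteq> VC" using order(2) unfolding edges_in_def by auto
  have EHes: "EH \<subseteq> set es" unfolding EH_def by (rule set_take_subset)
  have EHE: "EH \<subseteq> E" using EHes esE by blast
  have finEH: "finite EH" unfolding EH_def by simp
  have VHV: "VH \<subseteq> V" unfolding VH_def verts_of_def using EHes esE VCV by blast
  have finVH: "finite VH" using VHV finV finite_subset by blast
  have KM: "K \<subseteq> M"
  proof -
    have "M = foldl kruskal_step K (drop r es)"
      unfolding M_def kruskal_def K_def by (metis append_take_drop_id foldl_append)
    then show ?thesis using kr_mono by blast
  qed
  have KEH: "K \<subseteq> EH" unfolding K_def EH_def using kr_sub[of "{}" "take r es"] by simp
  have Mes: "M \<subseteq> set es" unfolding M_def kruskal_def using kr_sub[of "{}" es] by simp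
  have M2: "\<forall>e\<in>M. card e = 2" using Mes esE E2 by blast
  have bad: "\<forall>i. \<not> good i \<longrightarrow> card {e\<in>M. i\<in>e} = 1" unfolding good_def degree_def by simp
  have KC: "\<forall>e\<in>EH. \<forall>a b. e = {a,b} \<longrightarrow> conn K a b" unfolding K_def EH_def by (rule kr_conn)
  have feas: "lp_feasible V E x y" using opt unfolding lp_optimal_def by simp
  have yE: "\<forall>e\<in>E. 0 \<le> y e" using feas unfolding lp_feasible_def by simp
  have LP: "\<forall>S. S \<subseteq> V \<and> edges_in E S \<noteq> {} \<longrightarrow> sum x S - sum y (edges_in E S) \<ge> 1"
    using feas unfolding lp_feasible_def by simp
  have EH2: "\<exists>a b. e = {a,b} \<and> a \<noteq> b" if "e \<in> EH" for e
    using E2 EHE that card_2_iff by (metis subsetD)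
  have inVH: "a \<in> VH" if "e \<in> EH" "a \<in> e" for e a
    using that unfolding VH_def verts_of_def by blast
  let ?C = "components VH EH"
  have compE: "\<exists>s0\<in>VH. S = {v\<in>VH. conn EH s0 v}" if "S \<in> ?C" for S
    using that unfolding components_def by blast
  have classC: "{w\<in>VH. conn EH v w} \<in> ?C" if "v \<in> VH" for v
    using that unfolding components_def by blast
  have disj: "A = B" if ABt: "A \<in> ?C" "B \<in> ?C" "t \<in> A" "t \<in> B" for A B t
  proof -
    obtain s1 where s1: "s1\<in>VH" "A = {v\<in>VH. conn EH s1 v}" using compE[OF ABt(1)] by blast
    obtain s2 where s2: "s2\<in>VH" "B = {v\<in>VH. conn EH s2 v}" using compE[OF ABt(2)] by blast
    have c1: "conn EH s1 t" using ABt(3) s1(2) by blast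
    have c2: "conn EH s2 t" using ABt(4) s2(2) by blast
    have c12: "conn EH s1 s2" using conn_trans[OF c1 conn_sym[OF c2]] .
    have c21: "conn EH s2 s1" using conn_sym[OF c12] .
    have "conn EH s1 v \<longleftrightarrow> conn EH s2 v" for v
      using conn_trans[OF c12, of v] conn_trans[OF c21, of v] by blast
    then show ?thesis using s1(2) s2(2) by simp
  qed
  have cl: "\<forall>a b. {a,b} \<in> EH \<longrightarrow> a \<in> S \<longrightarrow> b \<in> S" if SC0: "S \<in> ?C" for S
  proof (intro allI impI)
    fix a b assume ab: "{a,b} \<in> EH" "a \<in> S"
    obtain s0 where s0: "s0\<in>VH" "S = {v\<in>VH. conn EH s0 v}" using compE[OF SC0] by blast
    have "conn EH s0 a" using ab(2) s0(2) by blast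
    then have "conn EH s0 b" using ab(1) by (rule conn_step)
    moreover have "b \<in> VH" using inVH[OF ab(1)] by simp
    ultimately show "b \<in> S" using s0(2) by blast
  qed
  have finC: "finite ?C"
  proof (rule finite_subset[of ?C "Pow VH"])
    show "?C \<subseteq> Pow VH" unfolding components_def by blast
  qed (use finVH in simp)
  have CVH: "S \<subseteq> VH" if "S \<in> ?C" for S using that unfolding components_def by blast
  have UC: "\<Union>?C = VH"
  proof
    show "\<Union>?C \<subseteq> VH" using CVH by blast
    show "VH \<subseteq> \<Union>?C"
    proof
      fix v assume v: "v \<in> VH"
      have "v \<in> {w\<in>VH. conn EH v w}" using v by (simp add: conn_refl)
      then show "v \<in> \<Union>?C" using classC[OF v] by blast
    qed
  qed
  have sumx: "sum x VH = (\<Sum>S\<in>?C. sum x S)"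
  proof -
    have "sum x (\<Union>?C) = (sum \<circ> sum) x ?C"
    proof (rule sum.Union_disjoint)
      show "\<forall>A\<in>?C. finite A" using CVH finVH finite_subset by blast
      show "\<forall>A\<in>?C. \<forall>B\<in>?C. A \<noteq> B \<longrightarrow> A \<inter> B = {}" using disj by blast
    qed
    then show ?thesis using UC by simp
  qed
  have UE: "EH = (\<Union>S\<in>?C. edges_in EH S)"
  proof
    show "(\<Union>S\<in>?C. edges_in EH S) \<subseteq> EH" unfolding edges_in_def by blast
    show "EH \<subseteq> (\<Union>S\<in>?C. edges_in EH S)"
    proof
      fix e assume e: "e \<in> EH"
      obtain a b where ab: "e = {a,b}" using EH2[OF e] by blast
      have aV: "a \<in> VH" using inVH[OF e] ab by simp
      let ?S = "{w\<in>VH. conn EH a w}"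
      have SC: "?S \<in> ?C" by (rule classC[OF aV])
      have aS: "a \<in> ?S" using aV by (simp add: conn_refl)
      have "{a,b} \<in> EH" using e ab by simp
      then have bS: "b \<in> ?S" using aS cl[OF SC] by blast
      have "e \<in> edges_in EH ?S" unfolding edges_in_def using e ab aS bS by blast
      then show "e \<in> (\<Union>S\<in>?C. edges_in EH S)" using SC by blast
    qed
  qed
  have sumy: "sum y EH = (\<Sum>S\<in>?C. sum y (edges_in EH S))"
  proof -
    have "sum y (\<Union>S\<in>?C. edges_in EH S) = (\<Sum>S\<in>?C. sum y (edges_in EH S))"
    proof (rule sum.UNION_disjoint[OF finC])
      show "\<forall>S\<in>?C. finite (edges_in EH S)" using finEH unfolding edges_in_def by simp
      show "\<forall>A\<in>?C. \<forall>B\<in>?C. A \<noteq> B \<longrightarrow> edges_in EH A \<inter> edges_in EH B = {}"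
      proof (intro ballI impI)
        fix A B assume AB: "A \<in> ?C" "B \<in> ?C" "A \<noteq> B"
        show "edges_in EH A \<inter> edges_in EH B = {}"
        proof (rule ccontr)
          assume "edges_in EH A \<inter> edges_in EH B \<noteq> {}"
          then obtain e where e: "e \<in> EH" "e \<subseteq> A" "e \<subseteq> B" unfolding edges_in_def by blast
          obtain a b where ab: "e = {a,b}" using EH2[OF e(1)] by blast
          have "a \<in> A" "a \<in> B" using e ab by auto
          then show False using disj[OF AB(1) AB(2)] AB(3) by blast
        qed
      qed
    qed
    then show ?thesis using UE by simp
  qed
  have key: "real (card (verts_of {e \<in> edges_in EH S. e \<in> ET})) - real (card {e \<in> edges_in EH S. e \<in> ET})
      \<le> sum x S - sum y (edges_in EH S)" if SC: "S \<in> ?C" for S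
  proof -
    obtain s0 where s0: "s0\<in>VH" "S = {v\<in>VH. conn EH s0 v}" using compE[OF SC] by blast
    have s0S: "s0 \<in> S" using s0 by (simp add: conn_refl)
    have clS: "\<forall>a b. {a,b} \<in> EH \<longrightarrow> a \<in> S \<longrightarrow> b \<in> S" by (rule cl[OF SC])
    have LHS: "1 \<le> sum x S - sum y (edges_in EH S)"
    proof -
      obtain e where e: "e \<in> EH" "s0 \<in> e" using s0(1) unfolding VH_def verts_of_def by blast
      obtain a b where ab: "e = {a,b}" using EH2[OF e(1)] by blast
      have aS: "a \<in> S" and bS: "b \<in> S"
      proof -
        have "{a,b} \<in> EH" "{b,a} \<in> EH" using e(1) ab by (auto simp: insert_commute)
        then have "a \<in> S \<longrightarrow> b \<in> S" "b \<in> S \<longrightarrow> a \<in> S" using clS by blast+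
        moreover have "s0 = a \<or> s0 = b" using e(2) ab by simp
        ultimately show "a \<in> S" "b \<in> S" using s0S by blast+
      qed
      have "e \<in> edges_in E S" unfolding edges_in_def using e(1) EHE ab aS bS by blast
      then have ne: "edges_in E S \<noteq> {}" by blast
      have SV: "S \<subseteq> V" using CVH[OF SC] VHV by blast
      have l1: "sum x S - sum y (edges_in E S) \<ge> 1" using LP SV ne by blast
      have "sum y (edges_in EH S) \<le> sum y (edges_in E S)"
      proof (rule sum_mono2)
        show "finite (edges_in E S)" using finE unfolding edges_in_def by simp
        show "edges_in EH S \<subseteq> edges_in E S" using EHE unfolding edges_in_def by blast
        show "0 \<le> y b" if "b \<in> edges_in E S - edges_in EH S" for b
          using that yE unfolding edges_in_def by blast
      qed
      then show ?thesis using l1 by linarith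
    qed
    define T where "T = {e \<in> edges_in EH S. e \<in> ET}"
    have T_def': "T = {e \<in> edges_in EH S. e \<in> {e\<in>M. \<forall>i\<in>e. good i}}" unfolding T_def ET' ..
    have finT: "finite T" unfolding T_def edges_in_def using finEH by simp
    have T2: "\<forall>e\<in>T. card e = 2" unfolding T_def edges_in_def using EHE E2 by blast
    have Tv: "v \<in> S \<and> good v" if vT: "v \<in> verts_of T" for v
    proof -
      obtain e where e: "e \<in> T" "v \<in> e" using vT unfolding verts_of_def by blast
      then show ?thesis unfolding T_def' edges_in_def by blast
    qed
    have RHS: "card (verts_of T) \<le> card T + 1"
    proof (cases "verts_of T = {}")
      case True then show ?thesis by simp
    next
      case False
      then obtain u where u: "u \<in> verts_of T" by blast
      have uS: "u \<in> S" and gu: "good u" using Tv[OF u] by auto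
      show ?thesis
      proof (rule conn_card[OF finT T2], intro ballI)
        fix v assume v: "v \<in> verts_of T"
        have vS: "v \<in> S" and gv: "good v" using Tv[OF v] by auto
        have c1: "conn EH s0 u" using uS s0(2) by blast
        have c2: "conn EH s0 v" using vS s0(2) by blast
        have "conn EH u v" using conn_trans[OF conn_sym[OF c1] c2] .
        then have "conn K u v" using KC by (rule conn_lift)
        then have "(adj K)\<^sup>*\<^sup>* u v" unfolding conn_def .
        from path_good[OF this KM KEH M2 bad gu uS clS T_def']
        show "conn T u v" using gv by blast
      qed
    qed
    then show ?thesis using LHS unfolding T_def[symmetric] by linarith
  qed
  have main: "sum x VH - sum y EH \<ge>
        (\<Sum>S\<in>?C. real (card (verts_of {e \<in> edges_in EH S. e \<in> ET})) - real (card {e \<in> edges_in EH S. e \<in> ET}))"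
  proof -
    have "(\<Sum>S\<in>?C. real (card (verts_of {e \<in> edges_in EH S. e \<in> ET})) - real (card {e \<in> edges_in EH S. e \<in> ET}))
        \<le> (\<Sum>S\<in>?C. sum x S - sum y (edges_in EH S))"
      by (rule sum_mono) (rule key)
    also have "\<dots> = sum x VH - sum y EH" using sumx sumy by (simp add: sum_subtractf)
    finally show ?thesis .
  qed
  show ?thesis using main unfolding Let_def M_def[symmetric] ET_def[symmetric] EH_def[symmetric] VH_def[symmetric] .
qed

end
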